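(* Let $f$ be smooth and bistable (there is $\alpha\in(0,1)$ with $f(0)=f(\alpha)=f(1)=0$, $f'(0),f'(1)<0<f'(\alpha)$, $f>0$ on $(-\infty,0)\cup(\alpha,1)$, $f<0$ on $(0,\alpha)\cup(1,\infty)$) and $\tau_m=1/\sup_{[0,1]}|f'|$. Set $\delta_+=-f'(1)>0$, $\delta_-=-f'(0)>0$ and $$\chi_0:=\tfrac12\min\{\delta_+,\delta_-\}>0.$$ For $\tau\in(0,\tau_m)$ let $c=c_\ast(\tau)$ be the speed of the traveling wave of $u_t=v_x+f(u)$, $\tau v_t=u_x-v$ connecting $(0,0)$ to $(1,0)$, and $b_\pm=1+\tau\delta_\pm$. Then for all $\tau\in(0,\tau_m)$, every $\xi\in\mathbb{R}$ and every $\lambda\in\mathbb{C}$ satisfying one of the dispersion relations $$\xi^2-ic\xi(b_\pm+2\tau\lambda)+(1-c^2\tau)(\tau\lambda^2+b_\pm\lambda+\delta_\pm)=0$$ satisfies $\mathrm{Re}\,\lambda<-\chi_0<0$.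
   Context: The roots $\lambda=\lambda^\pm_{1,2}(\xi)$ of the dispersion relations describe the algebraic curves on which the constant-coefficient limit systems at $x\to\pm\infty$ have purely imaginary spatial eigenvalues $i\xi$. *)

theory Defs
  imports "HOL-Analysis.Analysis"
begin

definition smooth_fun :: "(real \<Rightarrow> real) \<Rightarrow> bool" where
  "smooth_fun f \<longleftrightarrow> (\<forall>k x. ((deriv ^^ k) f) differentiable (at x))"

definition bistable :: "(real \<Rightarrow> real) \<Rightarrow> real \<Rightarrow> bool" where
  "bistable f \<alpha> \<longleftrightarrow> 0 < \<alpha> \<and> \<alpha> < 1 \<and>
     f 0 = 0 \<and> f \<alpha> = 0 \<and> f 1 = 0 \<and>
     deriv f 0 < 0 \<and> deriv f 1 < 0 \<and> 0 < deriv f \<alpha> \<and>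
     (\<forall>x. (x < 0 \<or> (\<alpha> < x \<and> x < 1)) \<longrightarrow> f x > 0) \<and>
     (\<forall>x. ((0 < x \<and> x < \<alpha>) \<or> 1 < x) \<longrightarrow> f x < 0)"

definition tau_m :: "(real \<Rightarrow> real) \<Rightarrow> real" where
  "tau_m f = 1 / (SUP x\<in>{0..1}. \<bar>deriv f x\<bar>)"

text \<open>c is the speed of a traveling wave u(x,t) = U(x - c t), v(x,t) = V(x - c t) of
  u_t = v_x + f(u), tau v_t = u_x - v with (U,V) tending to (0,0) at minus infinity
  and to (1,0) at plus infinity.\<close>
definition tw_speed :: "(real \<Rightarrow> real) \<Rightarrow> real \<Rightarrow> real \<Rightarrow> bool" where
  "tw_speed f \<tau> c \<longleftrightarrow> (\<exists>U V :: real \<Rightarrow> real.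
     (\<forall>z. U differentiable (at z) \<and> V differentiable (at z)) \<and>
     (\<forall>z. - c * deriv U z = deriv V z + f (U z)) \<and>
     (\<forall>z. - c * \<tau> * deriv V z = deriv U z - V z) \<and>
     (U \<longlongrightarrow> 0) at_bot \<and> (V \<longlongrightarrow> 0) at_bot \<and>
     (U \<longlongrightarrow> 1) at_top \<and> (V \<longlongrightarrow> 0) at_top)"

definition dispersion :: "real \<Rightarrow> real \<Rightarrow> real \<Rightarrow> real \<Rightarrow> complex \<Rightarrow> bool" where
  "dispersion \<tau> c \<delta> \<xi> lam \<longleftrightarrow>
     (let b = 1 + \<tau> * \<delta> in
      complex_of_real (\<xi>^2) - \<i> * complex_of_real (c * \<xi>) * (complex_of_real b + 2 * complex_of_real \<tau> * lam)
      + complex_of_real (1 - c^2 * \<tau>) * (complex_of_real \<tau> * lam^2 + complex_of_real b * lam + complex_of_real \<delta>) = 0)"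

end

theory Submission imports Defs begin


lemma disp_re:
  assumes d: "dispersion \<tau> c \<delta> \<xi> lam" and t: "0 < \<tau>" and dp: "0 < \<delta>" and td: "\<tau>*\<delta> < 2"
    and a0: "1 - c^2*\<tau> \<noteq> 0"
  shows "Re lam < - (\<delta>/2)"
proof -
  define x where "x = Re lam"
  define y where "y = Im lam"
  define a where "a = 1 - c^2*\<tau>"
  define b where "b = 1 + \<tau>*\<delta>"
  have lam: "lam = Complex x y" by (simp add: x_def y_def)
  have E: "complex_of_real (\<xi>^2) - \<i> * complex_of_real (c * \<xi>) * (complex_of_real b + 2 * complex_of_real \<tau> * lam)
      + complex_of_real a * (complex_of_real \<tau> * lam^2 + complex_of_real b * lam + complex_of_real \<delta>) = 0"
    using d unfolding dispersion_def Let_def a_def b_def by simp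
  have R: "\<xi>^2 + 2*\<tau>*c*\<xi>*y + a*(\<tau>*(x^2-y^2)+b*x+\<delta>) = 0"
    using arg_cong[OF E, of Re] unfolding lam by (simp add: power2_eq_square algebra_simps)
  have I: "-c*\<xi>*(b+2*\<tau>*x) + a*(2*\<tau>*x*y+b*y) = 0"
    using arg_cong[OF E, of Im] unfolding lam by (simp add: power2_eq_square algebra_simps)
  have I2: "(b+2*\<tau>*x)*(a*y - c*\<xi>) = 0" using I by (simp add: algebra_simps)
  show ?thesis
  proof (cases "b+2*\<tau>*x = 0")
    case True
    then have "x = -b/(2*\<tau>)" using t by (simp add: field_simps)
    also have "\<dots> < -(\<delta>/2)" using t unfolding b_def by (simp add: field_simps)
    finally show ?thesis by (simp add: x_def)
  next
    case False
    then have ay: "a*y = c*\<xi>" using I2 by simp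
    have "a*(a*(\<tau>*x^2+b*x+\<delta>)) = -(\<xi>^2)"
    proof -
      have "a*(\<xi>^2 + 2*\<tau>*c*\<xi>*y + a*(\<tau>*(x^2-y^2)+b*x+\<delta>)) = 0" using R by simp
      then have "a*\<xi>^2 + 2*\<tau>*(c*\<xi>)*(a*y) + a*a*(\<tau>*x^2+b*x+\<delta>) - \<tau>*(a*y)^2 = 0"
        by (simp add: algebra_simps power2_eq_square)
      then have "a*\<xi>^2 + 2*\<tau>*(c*\<xi>)^2 + a*a*(\<tau>*x^2+b*x+\<delta>) - \<tau>*(c*\<xi>)^2 = 0"
        unfolding ay by (simp add: power2_eq_square)
      then have "(a + \<tau>*c^2)*\<xi>^2 + a*a*(\<tau>*x^2+b*x+\<delta>) = 0"
        by (simp add: algebra_simps power2_eq_square)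
      moreover have "a + \<tau>*c^2 = 1" unfolding a_def by simp
      ultimately show ?thesis by (simp add: algebra_simps)
    qed
    then have "(a*a)*(\<tau>*x^2+b*x+\<delta>) \<le> 0" by (simp add: algebra_simps)
    moreover have "a*a > 0" using a0 unfolding a_def by (metis not_real_square_gt_zero)
    ultimately have Q: "\<tau>*x^2+b*x+\<delta> \<le> 0" by (metis mult_le_0_iff not_less order_antisym mult_zero_left less_irrefl)
    show ?thesis
    proof (rule ccontr)
      assume "\<not> Re lam < - (\<delta>/2)"
      then have xg: "x \<ge> -(\<delta>/2)" by (simp add: x_def)
      have "\<tau>*x^2+b*x+\<delta> = (\<tau>*x+1)*(x+\<delta>)" unfolding b_def by (simp add: algebra_simps power2_eq_square)
      moreover have "\<tau>*x+1 > 0"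
      proof -
        have "\<tau>*x \<ge> \<tau>*(-(\<delta>/2))" using mult_left_mono[OF xg, of \<tau>] t by simp
        then show ?thesis using td by simp
      qed
      moreover have "x+\<delta> > 0" using xg dp by simp
      ultimately have "\<tau>*x^2+b*x+\<delta> > 0" by simp
      then show False using Q by simp
    qed
  qed
qed


lemma gron_zero:
  fixes w w' :: "real \<Rightarrow> real"
  assumes D: "\<And>z. (w has_real_derivative w' z) (at z)"
    and z0: "w z0 = 0" and r: "r > 0" and L: "L \<ge> 0"
    and B: "\<And>z. \<bar>w z\<bar> < r \<Longrightarrow> \<bar>w' z\<bar> \<le> L * \<bar>w z\<bar>"
  shows "w z = 0"
proof -
  have wc: "isCont w z" for z using D DERIV_isCont by blast
  have loc: "w t = 0" if "w z = 0" "\<And>s. \<bar>s - z\<bar> \<le> \<bar>t - z\<bar> \<Longrightarrow> \<bar>w s\<bar> < r" for z t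
  proof (cases "z \<le> t")
    case True
    define h where "h s = exp (- (2*L* s)) * ((w s)^2)" for s
    have "h t \<le> h z"
    proof (rule DERIV_nonpos_imp_nonincreasing[OF True])
      fix s assume s: "z \<le> s" "s \<le> t"
      have hd: "(h has_real_derivative exp (- (2*L* s)) * (2 * w s * w' s - 2*L*(w s)^2)) (at s)"
        unfolding h_def
        by (rule derivative_eq_intros D refl | simp)+ (simp add: algebra_simps)
      have "\<bar>w s\<bar> < r" using that(2)[of s] s by simp
      then have "\<bar>w' s\<bar> \<le> L * \<bar>w s\<bar>" by (rule B)
      then have "w s * w' s \<le> L*((w s)^2)"
      proof -
        assume a: "\<bar>w' s\<bar> \<le> L * \<bar>w s\<bar>"
        have "w s * w' s \<le> \<bar>w s\<bar> * \<bar>w' s\<bar>" by (simp add: abs_mult[symmetric])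
        also have "\<dots> \<le> \<bar>w s\<bar> * (L * \<bar>w s\<bar>)" using a by (simp add: mult_left_mono)
        also have "\<dots> = L*((w s)^2)" by (simp add: power2_eq_square algebra_simps)
        finally show ?thesis .
      qed
      then have "exp (- (2*L* s)) * (2 * w s * w' s - 2*L*(w s)^2) \<le> 0"
        by (simp add: mult_nonneg_nonpos)
      then show "\<exists>y. (h has_real_derivative y) (at s) \<and> y \<le> 0" using hd by blast
    qed
    then have "exp (-2*L*t) * (w t)^2 \<le> 0" using that(1) by (simp add: h_def)
    then have "(w t)^2 \<le> 0" by (simp add: mult_le_0_iff)
    then show ?thesis by simp
  next
    case False
    then have ft: "t \<le> z" by simp
    define h where "h s = exp (2*L* s) * ((w s)^2)" for s
    have "h t \<le> h z"
    proof (rule DERIV_nonneg_imp_nondecreasing[OF ft])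
      fix s assume s: "t \<le> s" "s \<le> z"
      have hd: "(h has_real_derivative exp (2*L* s) * (2 * w s * w' s + 2*L*(w s)^2)) (at s)"
        unfolding h_def
        by (rule derivative_eq_intros D refl | simp)+ (simp add: algebra_simps)
      have "\<bar>w s\<bar> < r" using that(2)[of s] s by simp
      then have "\<bar>w' s\<bar> \<le> L * \<bar>w s\<bar>" by (rule B)
      then have "- (w s * w' s) \<le> L*((w s)^2)"
      proof -
        assume a: "\<bar>w' s\<bar> \<le> L * \<bar>w s\<bar>"
        have "- (w s * w' s) \<le> \<bar>w s\<bar> * \<bar>w' s\<bar>" by (simp add: abs_mult[symmetric])
        also have "\<dots> \<le> \<bar>w s\<bar> * (L * \<bar>w s\<bar>)" using a by (simp add: mult_left_mono)
        also have "\<dots> = L*((w s)^2)" by (simp add: power2_eq_square algebra_simps)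
        finally show ?thesis .
      qed
      then have "exp (2*L* s) * (2 * w s * w' s + 2*L*(w s)^2) \<ge> 0"
        by simp
      then show "\<exists>y. (h has_real_derivative y) (at s) \<and> y \<ge> 0" using hd by blast
    qed
    then have "exp (2*L*t) * (w t)^2 \<le> 0" using that(1) by (simp add: h_def)
    then have "(w t)^2 \<le> 0" by (simp add: mult_le_0_iff)
    then show ?thesis by simp
  qed
  define S where "S = {z. w z = 0}"
  define T where "T = {z. w z \<noteq> 0}"
  have oS: "open S" unfolding open_contains_ball
  proof
    fix z assume "z \<in> S"
    then have wz: "w z = 0" by (simp add: S_def)
    obtain e where e: "e > 0" "\<And>x'. dist x' z < e \<Longrightarrow> dist (w x') (w z) < r"
      using wc[of z] r unfolding continuous_at_eps_delta by blast
    have "ball z e \<subseteq> S"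
    proof
      fix t assume "t \<in> ball z e"
      then have te: "\<bar>t - z\<bar> < e" by (simp add: dist_real_def abs_minus_commute)
      have "w t = 0"
      proof (rule loc[OF wz])
        fix s assume "\<bar>s - z\<bar> \<le> \<bar>t - z\<bar>"
        then have "dist s z < e" using te by (simp add: dist_real_def)
        then show "\<bar>w s\<bar> < r" using e(2)[of s] wz by (simp add: dist_real_def)
      qed
      then show "t \<in> S" by (simp add: S_def)
    qed
    then show "\<exists>e>0. ball z e \<subseteq> S" using e by blast
  qed
  have oT: "open T" unfolding T_def
    by (rule open_Collect_neq) (auto intro: continuous_intros simp: continuous_on_eq_continuous_at wc)
  have "S \<inter> UNIV = {} \<or> T \<inter> UNIV = {}"
    by (rule connectedD[OF connected_UNIV oS oT]) (auto simp: S_def T_def)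
  moreover have "z0 \<in> S" using z0 by (simp add: S_def)
  ultimately have "T = {}" by auto
  then show ?thesis by (auto simp: T_def)
qed


lemma lip_near:
  fixes f f' :: "real \<Rightarrow> real"
  assumes D: "\<And>x. (f has_real_derivative f' x) (at x)"
    and B: "\<And>x. \<bar>x - a\<bar> < r \<Longrightarrow> \<bar>f' x\<bar> \<le> M"
    and u: "\<bar>u - a\<bar> < r"
  shows "\<bar>f u - f a\<bar> \<le> M * \<bar>u - a\<bar>"
proof (cases "u < a")
  case True
  obtain z where z: "u < z" "z < a" "f a - f u = (a - u) * f' z"
    using MVT2[OF True, of f f'] D by blast
  have "\<bar>f' z\<bar> \<le> M" using B[of z] z u True by simp
  then show ?thesis using z True
    by (simp add: abs_mult abs_minus_commute[of "f u"] abs_minus_commute[of u] mult.commute mult_right_mono)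
next
  case False
  show ?thesis
  proof (cases "u = a")
    case True then show ?thesis by simp
  next
    case False
    with \<open>\<not> u < a\<close> have ua: "a < u" by simp
    obtain z where z: "a < z" "z < u" "f u - f a = (u - a) * f' z"
      using MVT2[OF ua, of f f'] D by blast
    have "\<bar>f' z\<bar> \<le> M" using B[of z] z u ua by simp
    then show ?thesis using z ua
      by (simp add: abs_mult mult.commute mult_right_mono)
  qed
qed

lemma no_char:
  fixes f :: "real \<Rightarrow> real" and \<alpha> \<tau> c :: real
  assumes sm: "smooth_fun f" and bi: "bistable f \<alpha>" and t: "0 < \<tau>"
    and ct: "c^2 * \<tau> = 1" and fa: "deriv f \<alpha> < c^2" and tw: "tw_speed f \<tau> c"
  shows False
proof -
  obtain U V :: "real \<Rightarrow> real" where
    dif: "\<And>z. U differentiable (at z) \<and> V differentiable (at z)" and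
    e1: "\<And>z. - c * deriv U z = deriv V z + f (U z)" and
    e2: "\<And>z. - c * \<tau> * deriv V z = deriv U z - V z" and
    l0: "(U \<longlongrightarrow> 0) at_bot" and l1: "(U \<longlongrightarrow> 1) at_top"
    using tw unfolding tw_speed_def by blast
  have c0: "c \<noteq> 0" using ct by auto
  have DU: "(U has_real_derivative deriv U z) (at z)" for z
    using dif DERIV_deriv_iff_real_differentiable by blast
  have Df: "(f has_real_derivative deriv f x) (at x)" for x
    using sm unfolding smooth_fun_def DERIV_deriv_iff_real_differentiable[symmetric]
    by (metis funpow_0)
  have Df1: "(deriv f) differentiable (at x)" for x
  proof -
    have "(deriv ^^ 1) f = deriv f" by simp
    then show ?thesis using sm unfolding smooth_fun_def by metis
  qed
  have cf: "isCont (deriv f) x" for x using Df1 differentiable_imp_continuous_within by blast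
  have Veq: "c * V z = - f (U z)" for z
  proof -
    have "c * (- c * \<tau> * deriv V z) = c * (deriv U z - V z)" using e2 by simp
    then have "- (c^2 * \<tau>) * deriv V z = c * deriv U z - c * V z" by (simp add: algebra_simps power2_eq_square)
    then have "- deriv V z = c * deriv U z - c * V z" using ct by simp
    then show ?thesis using e1[of z] by (simp add: algebra_simps)
  qed
  have Vfun: "V = (\<lambda>z. - f (U z) / c)" using Veq c0 by (auto simp: field_simps)
  have dV: "deriv V z = - (deriv f (U z) * deriv U z) / c" for z
  proof -
    have "((\<lambda>z. - f (U z) / c) has_real_derivative - (deriv f (U z) * deriv U z) / c) (at z)"
      by (rule derivative_eq_intros DERIV_chain2[OF Df DU] refl | simp)+ (use c0 in \<open>auto simp: field_simps\<close>)
    then show ?thesis unfolding Vfun by (rule DERIV_imp_deriv)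
  qed
  have Ueq: "deriv U z * (c^2 - deriv f (U z)) = - c * f (U z)" for z
  proof -
    have "- c * deriv U z = - (deriv f (U z) * deriv U z) / c + f (U z)" using e1[of z] dV[of z] by simp
    then have "c * (- c * deriv U z) = c * (- (deriv f (U z) * deriv U z) / c + f (U z))" by simp
    then have "- (c^2) * deriv U z = - (deriv f (U z) * deriv U z) + c * f (U z)"
      using c0 by (simp add: algebra_simps power2_eq_square)
    then show ?thesis by (simp add: algebra_simps)
  qed
  define \<epsilon> where "\<epsilon> = min ((c^2 - deriv f \<alpha>) / 2) 1"
  have ep: "\<epsilon> > 0" using fa by (simp add: \<epsilon>_def)
  obtain r where r: "r > 0" "\<And>x'. dist x' \<alpha> < r \<Longrightarrow> dist (deriv f x') (deriv f \<alpha>) < \<epsilon>"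
    using cf[of \<alpha>] ep unfolding continuous_at_eps_delta by blast
  define M where "M = \<bar>deriv f \<alpha>\<bar> + 1"
  have Mb: "\<bar>deriv f x\<bar> \<le> M" if "\<bar>x - \<alpha>\<bar> < r" for x
  proof -
    have "\<bar>deriv f x - deriv f \<alpha>\<bar> < \<epsilon>" using r(2)[of x] that by (simp add: dist_real_def)
    then have "\<bar>deriv f x - deriv f \<alpha>\<bar> < 1" unfolding \<epsilon>_def by simp
    then show ?thesis unfolding M_def by linarith
  qed
  have den: "c^2 - deriv f x \<ge> (c^2 - deriv f \<alpha>) / 2" if "\<bar>x - \<alpha>\<bar> < r" for x
  proof -
    have "\<bar>deriv f x - deriv f \<alpha>\<bar> < \<epsilon>" using r(2)[of x] that by (simp add: dist_real_def)
    then have "\<bar>deriv f x - deriv f \<alpha>\<bar> < (c^2 - deriv f \<alpha>) / 2" unfolding \<epsilon>_def by simp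
    then have "deriv f x - deriv f \<alpha> < (c^2 - deriv f \<alpha>) / 2" by linarith
    then show ?thesis by (simp add: field_simps)
  qed
  define k where "k = (c^2 - deriv f \<alpha>) / 2"
  have k0: "k > 0" using fa by (simp add: k_def)
  have fal: "f \<alpha> = 0" using bi by (simp add: bistable_def)
  define L where "L = \<bar>c\<bar> * M / k"
  have L0: "L \<ge> 0" unfolding L_def M_def using k0 by simp
  have B: "\<bar>deriv U z\<bar> \<le> L * \<bar>U z - \<alpha>\<bar>" if "\<bar>U z - \<alpha>\<bar> < r" for z
  proof -
    have dk: "c^2 - deriv f (U z) \<ge> k" using den[OF that] by (simp add: k_def)
    have "\<bar>f (U z)\<bar> \<le> M * \<bar>U z - \<alpha>\<bar>"
      using lip_near[OF Df Mb that] fal by simp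
    have "\<bar>deriv U z\<bar> * k \<le> \<bar>deriv U z\<bar> * (c^2 - deriv f (U z))"
      using dk by (simp add: mult_left_mono)
    also have "\<dots> = \<bar>deriv U z * (c^2 - deriv f (U z))\<bar>" using dk k0 by (simp add: abs_mult)
    also have "\<dots> = \<bar>c\<bar> * \<bar>f (U z)\<bar>" unfolding Ueq by (simp add: abs_mult)
    also have "\<dots> \<le> \<bar>c\<bar> * (M * \<bar>U z - \<alpha>\<bar>)" using \<open>\<bar>f (U z)\<bar> \<le> M * \<bar>U z - \<alpha>\<bar>\<close>
      by (simp add: mult_left_mono)
    finally have "\<bar>deriv U z\<bar> * k \<le> \<bar>c\<bar> * (M * \<bar>U z - \<alpha>\<bar>)" .
    then show ?thesis unfolding L_def using k0 by (simp add: field_simps)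
  qed
  have cU: "continuous_on A U" for A
    using DU by (meson DERIV_isCont continuous_at_imp_continuous_on)
  have a01: "0 < \<alpha>" "\<alpha> < 1" using bi by (auto simp: bistable_def)
  obtain p where p: "U p < \<alpha>"
    using order_tendstoD(2)[OF l0 a01(1)] by (metis eventually_at_bot_linorder order_refl)
  obtain q where q: "U q > \<alpha>"
    using order_tendstoD(1)[OF l1 a01(2)] by (metis eventually_at_top_linorder order_refl)
  obtain z0 where z0: "U z0 = \<alpha>"
  proof (cases "p \<le> q")
    case True
    then show ?thesis using IVT'[of U p \<alpha> q] p q cU that by force
  next
    case False
    then show ?thesis using IVT2'[of U p \<alpha> q] p q cU that by force
  qed
  have D': "((\<lambda>z. U z - \<alpha>) has_real_derivative deriv U z) (at z)" for z
    using DU[of z] by (auto intro!: derivative_eq_intros)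
  have z0': "(\<lambda>z. U z - \<alpha>) z0 = 0" using z0 by simp
  have Uc: "U z - \<alpha> = 0" for z
    using gron_zero[of "\<lambda>z. U z - \<alpha>" "deriv U" z0 r L z, OF D' z0' r(1) L0] B by simp
  then have "U = (\<lambda>z. \<alpha>)" by auto
  then have "((\<lambda>z::real. \<alpha>) \<longlongrightarrow> 0) at_bot" using l0 by simp
  then have "\<alpha> = 0" by (simp add: tendsto_const_iff)
  then show False using a01 by simp
qed


theorem lemma3p12:
  fixes f :: "real \<Rightarrow> real" and \<alpha> \<tau> c :: real
  assumes "smooth_fun f" and "bistable f \<alpha>"
    and "0 < \<tau>" and "\<tau> < tau_m f"
    and "tw_speed f \<tau> c"
  shows "\<forall>\<xi>::real. \<forall>lam::complex.
     (dispersion \<tau> c (- deriv f 1) \<xi> lam \<or> dispersion \<tau> c (- deriv f 0) \<xi> lam) \<longrightarrow>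
     Re lam < - (min (- deriv f 1) (- deriv f 0) / 2) \<and> - (min (- deriv f 1) (- deriv f 0) / 2) < 0"
proof -
  note sm = assms(1) and bi = assms(2) and t = assms(3) and tm = assms(4) and tw = assms(5)
  have Df1: "(deriv f) differentiable (at x)" for x
  proof -
    have "(deriv ^^ 1) f = deriv f" by simp
    then show ?thesis using sm unfolding smooth_fun_def by metis
  qed
  have cont: "continuous_on {0..1} (\<lambda>x. \<bar>deriv f x\<bar>)"
    using Df1 by (intro continuous_intros continuous_at_imp_continuous_on)
      (auto intro: differentiable_imp_continuous_within)
  have bdd: "bdd_above ((\<lambda>x. \<bar>deriv f x\<bar>) ` {0..1})"
    by (rule bounded_imp_bdd_above, rule compact_imp_bounded, rule compact_continuous_image[OF cont]) simp
  define s where "s = (SUP x\<in>{0..1}. \<bar>deriv f x\<bar>)"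
  have sup: "\<bar>deriv f x\<bar> \<le> s" if "x \<in> {0..1}" for x
    unfolding s_def using cSUP_upper[OF that bdd] .
  have d1: "deriv f 1 < 0" and d0: "deriv f 0 < 0" and a01: "0 < \<alpha>" "\<alpha> < 1"
    using bi by (auto simp: bistable_def)
  have s1: "- deriv f 1 \<le> s" using sup[of 1] d1 by simp
  have s0: "- deriv f 0 \<le> s" using sup[of 0] d0 by simp
  have sa: "deriv f \<alpha> \<le> s" using sup[of \<alpha>] a01 by simp
  have spos: "s > 0" using s1 d1 by simp
  have ts: "\<tau> * s < 1" using tm spos unfolding tau_m_def s_def[symmetric] by (simp add: field_simps)
  have ct: "1 - c^2 * \<tau> \<noteq> 0"
  proof
    assume h: "1 - c^2 * \<tau> = 0"
    then have ct1: "c^2 * \<tau> = 1" by simp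
    have "\<tau> * deriv f \<alpha> \<le> \<tau> * s" using mult_left_mono[OF sa, of \<tau>] t by simp
    then have "\<tau> * deriv f \<alpha> < c^2 * \<tau>" using ts ct1 by simp
    then have "deriv f \<alpha> < c^2" using t by (simp add: mult.commute)
    then show False using no_char[OF sm bi t ct1 _ tw] by simp
  qed
  have td1: "\<tau> * (- deriv f 1) < 2"
  proof -
    have "\<tau> * (- deriv f 1) \<le> \<tau> * s" using mult_left_mono[OF s1, of \<tau>] t by simp
    then show ?thesis using ts by simp
  qed
  have td0: "\<tau> * (- deriv f 0) < 2"
  proof -
    have "\<tau> * (- deriv f 0) \<le> \<tau> * s" using mult_left_mono[OF s0, of \<tau>] t by simp
    then show ?thesis using ts by simp
  qed
  show ?thesis
  proof (intro allI impI conjI)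
    fix \<xi> lam assume "dispersion \<tau> c (- deriv f 1) \<xi> lam \<or> dispersion \<tau> c (- deriv f 0) \<xi> lam"
    then show "Re lam < - (min (- deriv f 1) (- deriv f 0) / 2)"
    proof
      assume "dispersion \<tau> c (- deriv f 1) \<xi> lam"
      from disp_re[OF this t _ td1 ct] d1 show ?thesis by simp
    next
      assume "dispersion \<tau> c (- deriv f 0) \<xi> lam"
      from disp_re[OF this t _ td0 ct] d0 show ?thesis by simp
    qed
  next
    show "- (min (- deriv f 1) (- deriv f 0) / 2) < 0" using d0 d1 by simp
  qed
qed

end
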